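(* If QEPmin is in the easy case, then CRQopt has a unique minimizer.
   Context: Let $A\in\mathbb{R}^{n\times n}$ be symmetric, $C\in\mathbb{R}^{n\times m}$ ($m<n$) full column rank, $b\in\mathbb{R}^m$, $n_0=C(C^{\top}C)^{-1}b$ with $\|n_0\|<1$, $\gamma=\sqrt{1-\|n_0\|^2}$, $P=I-C(C^{\top}C)^{-1}C^{\top}$ (orthogonal projector onto $\mathcal N(C^{\top})$), $b_0=PAn_0$, assumed nonzero. CRQopt: minimize $v^{\top}Av$ over $v\in\mathbb{R}^n$ subject to $v^{\top}v=1$ and $C^{\top}v=b$. QEPmin: minimize $\lambda$ over pairs $(\lambda,z)$ with $\lambda\in\mathbb{R}$, $0\neq z\in\mathcal N(C^{\top})$ and $(PAP-\lambda I)^2z=\gamma^{-2}b_0b_0^{\top}z$. QEPmin is in the hard case if it has a minimizer $(\lambda_*,z_* )$ with $b_0^{\top}z_*=0$; otherwise it is in the easy case. *)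

theory Defs
  imports "HOL-Analysis.Analysis"
begin

definition n0_vec :: "real^'m^'n \<Rightarrow> real^'m \<Rightarrow> real^'n" where
  "n0_vec C b = C *v (matrix_inv (transpose C ** C) *v b)"

definition gam :: "real^'m^'n \<Rightarrow> real^'m \<Rightarrow> real" where
  "gam C b = sqrt (1 - (norm (n0_vec C b))\<^sup>2)"

definition projP :: "real^'m^'n \<Rightarrow> real^'n^'n" where
  "projP C = mat 1 - C ** matrix_inv (transpose C ** C) ** transpose C"

definition b0_vec :: "real^'n^'n \<Rightarrow> real^'m^'n \<Rightarrow> real^'m \<Rightarrow> real^'n" where
  "b0_vec A C b = projP C *v (A *v n0_vec C b)"

definition qep_feasible :: "real^'n^'n \<Rightarrow> real^'m^'n \<Rightarrow> real^'m \<Rightarrow> real \<Rightarrow> real^'n \<Rightarrow> bool" where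
  "qep_feasible A C b lam z \<longleftrightarrow>
     z \<noteq> 0 \<and> transpose C *v z = 0 \<and>
     (let M = projP C ** A ** projP C - lam *\<^sub>R mat 1
      in M *v (M *v z) = (inverse ((gam C b)\<^sup>2) * (b0_vec A C b \<bullet> z)) *\<^sub>R b0_vec A C b)"

definition qep_minimizer :: "real^'n^'n \<Rightarrow> real^'m^'n \<Rightarrow> real^'m \<Rightarrow> real \<Rightarrow> real^'n \<Rightarrow> bool" where
  "qep_minimizer A C b lam z \<longleftrightarrow>
     qep_feasible A C b lam z \<and> (\<forall>lam' z'. qep_feasible A C b lam' z' \<longrightarrow> lam \<le> lam')"

definition qep_hard_case :: "real^'n^'n \<Rightarrow> real^'m^'n \<Rightarrow> real^'m \<Rightarrow> bool" where
  "qep_hard_case A C b \<longleftrightarrow>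
     (\<exists>lam z. qep_minimizer A C b lam z \<and> b0_vec A C b \<bullet> z = 0)"

definition qep_easy_case :: "real^'n^'n \<Rightarrow> real^'m^'n \<Rightarrow> real^'m \<Rightarrow> bool" where
  "qep_easy_case A C b \<longleftrightarrow> \<not> qep_hard_case A C b"

definition crq_feasible :: "real^'m^'n \<Rightarrow> real^'m \<Rightarrow> real^'n \<Rightarrow> bool" where
  "crq_feasible C b v \<longleftrightarrow> v \<bullet> v = 1 \<and> transpose C *v v = b"

definition crq_minimizer :: "real^'n^'n \<Rightarrow> real^'m^'n \<Rightarrow> real^'m \<Rightarrow> real^'n \<Rightarrow> bool" where
  "crq_minimizer A C b v \<longleftrightarrow>
     crq_feasible C b v \<and> (\<forall>w. crq_feasible C b w \<longrightarrow> v \<bullet> (A *v v) \<le> w \<bullet> (A *v w))"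

end

theory Submission
  imports Defs
begin


lemma gram_inv:
  fixes C :: "real^'m^'n"
  assumes "rank C = CARD('m)"
  shows "(transpose C ** C) ** matrix_inv (transpose C ** C) = mat 1
       \<and> matrix_inv (transpose C ** C) ** (transpose C ** C) = mat 1"
proof -
  have injC: "inj ((*v) C)" using assms full_rank_injective by blast
  have "inj ((*v) (transpose C ** C))"
  proof (rule injI)
    fix x y assume h: "(transpose C ** C) *v x = (transpose C ** C) *v y"
    let ?d = "x - y"
    have "(transpose C ** C) *v ?d = 0" using h by (simp add: matrix_vector_mult_diff_distrib)
    hence "?d \<bullet> ((transpose C ** C) *v ?d) = 0" by simp
    moreover have "?d \<bullet> ((transpose C ** C) *v ?d) = (C *v ?d) \<bullet> (C *v ?d)"
      by (metis dot_lmul_matrix matrix_vector_mul_assoc transpose_matrix_vector inner_commute)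
    ultimately have "C *v ?d = 0" by simp
    hence "C *v x = C *v y" by (simp add: matrix_vector_mult_diff_distrib)
    thus "x = y" using injC by (simp add: inj_eq)
  qed
  then obtain B where "B ** (transpose C ** C) = mat 1"
    using matrix_left_invertible_injective by blast
  hence "invertible (transpose C ** C)" using invertible_left_inverse by blast
  thus ?thesis unfolding invertible_def matrix_inv_def by (rule someI_ex)
qed

lemma perp_range:
  fixes C :: "real^'m^'n"
  assumes "transpose C *v x = 0"
  shows "x \<bullet> (C *v w) = 0"
  by (metis assms dot_lmul_matrix transpose_matrix_vector inner_zero_left)

lemma n0_feas:
  fixes C :: "real^'m^'n"
  assumes "rank C = CARD('m)"
  shows "transpose C *v n0_vec C b = b"
proof -
  have "transpose C *v n0_vec C b = ((transpose C ** C) ** matrix_inv (transpose C ** C)) *v b"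
    unfolding n0_vec_def by (simp only: matrix_vector_mul_assoc[symmetric])
  thus ?thesis using gram_inv[OF assms] by simp
qed

lemma n0_perp:
  fixes C :: "real^'m^'n"
  assumes "transpose C *v x = 0"
  shows "x \<bullet> n0_vec C b = 0"
  unfolding n0_vec_def by (rule perp_range[OF assms])

lemma projP_apply:
  fixes C :: "real^'m^'n"
  shows "projP C *v y = y - C *v (matrix_inv (transpose C ** C) *v (transpose C *v y))"
  unfolding projP_def by (simp only: matrix_vector_mult_diff_rdistrib matrix_vector_mul_assoc[symmetric] matrix_vector_mul_lid)

lemma projP_in:
  fixes C :: "real^'m^'n"
  assumes "rank C = CARD('m)"
  shows "transpose C *v (projP C *v y) = 0"
proof -
  have "transpose C *v (projP C *v y) = transpose C *v y -
     ((transpose C ** C) ** matrix_inv (transpose C ** C)) *v (transpose C *v y)"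
    unfolding projP_apply by (simp only: matrix_vector_mult_diff_distrib matrix_vector_mul_assoc[symmetric])
  thus ?thesis using gram_inv[OF assms] by simp
qed

lemma projP_id:
  fixes C :: "real^'m^'n"
  assumes "transpose C *v x = 0"
  shows "projP C *v x = x"
  unfolding projP_apply using assms by simp

lemma projP_inner:
  fixes C :: "real^'m^'n"
  assumes "transpose C *v x = 0"
  shows "x \<bullet> (projP C *v y) = x \<bullet> y"
  unfolding projP_apply using perp_range[OF assms] by (simp add: inner_diff_right)

lemma sym_inner:
  fixes A :: "real^'n^'n"
  assumes "transpose A = A"
  shows "x \<bullet> (A *v y) = y \<bullet> (A *v x)"
  by (metis assms dot_lmul_matrix transpose_matrix_vector inner_commute)

lemma M_apply:
  fixes C :: "real^'m^'n" and A :: "real^'n^'n"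
  assumes "transpose C *v x = 0"
  shows "(projP C ** A ** projP C - mu *\<^sub>R mat 1) *v x = projP C *v (A *v x) - mu *\<^sub>R x"
proof -
  have "(projP C ** A ** projP C - mu *\<^sub>R mat 1) *v x = projP C *v (A *v (projP C *v x)) - mu *\<^sub>R x"
    by (simp add: matrix_vector_mult_diff_rdistrib matrix_vector_mul_assoc matrix_mul_assoc scaleR_matrix_vector_assoc[symmetric])
  thus ?thesis using projP_id[OF assms] by simp
qed


lemma quad_expand:
  fixes A :: "real^'n^'n"
  assumes "transpose A = A"
  shows "(v + a *\<^sub>R x + c *\<^sub>R y) \<bullet> (A *v (v + a *\<^sub>R x + c *\<^sub>R y)) =
     v \<bullet> (A *v v) + 2 * a * (x \<bullet> (A *v v)) + 2 * c * (y \<bullet> (A *v v))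
     + a\<^sup>2 * (x \<bullet> (A *v x)) + 2 * a * c * (x \<bullet> (A *v y)) + c\<^sup>2 * (y \<bullet> (A *v y))"
proof -
  have s1: "v \<bullet> (A *v x) = x \<bullet> (A *v v)" and s2: "v \<bullet> (A *v y) = y \<bullet> (A *v v)"
    and s3: "y \<bullet> (A *v x) = x \<bullet> (A *v y)" using sym_inner[OF assms] by blast+
  show ?thesis
    by (simp add: matrix_vector_right_distrib matrix_vector_mult_scaleR inner_add_left inner_add_right
        s1 s2 s3 power2_eq_square algebra_simps)
qed

lemma norm_expand3:
  fixes p q r :: "real^'n"
  assumes "p \<bullet> q = 0" "p \<bullet> r = 0" "q \<bullet> r = 0"
  shows "(p + a *\<^sub>R q + c *\<^sub>R r) \<bullet> (p + a *\<^sub>R q + c *\<^sub>R r) = p \<bullet> p + a\<^sup>2 * (q \<bullet> q) + c\<^sup>2 * (r \<bullet> r)"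
  using assms by (simp add: inner_add_left inner_add_right inner_commute power2_eq_square algebra_simps)

lemma crq_identity:
  fixes A :: "real^'n^'n" and C :: "real^'m^'n"
  assumes sym: "transpose A = A"
    and f0: "crq_feasible C b v0" and f: "crq_feasible C b v"
    and fo: "\<forall>x. transpose C *v x = 0 \<longrightarrow> x \<bullet> (A *v v0) = mu * (x \<bullet> v0)"
  shows "v \<bullet> (A *v v) - v0 \<bullet> (A *v v0) = (v - v0) \<bullet> (A *v (v - v0)) - mu * ((v - v0) \<bullet> (v - v0))"
proof -
  define d where "d = v - v0"
  have vd: "v = v0 + 1 *\<^sub>R d + 0 *\<^sub>R d" unfolding d_def by simp
  have dS: "transpose C *v d = 0" using f0 f unfolding d_def crq_feasible_def
    by (simp add: matrix_vector_mult_diff_distrib)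
  have "v \<bullet> (A *v v) = v0 \<bullet> (A *v v0) + 2 * (d \<bullet> (A *v v0)) + d \<bullet> (A *v d)"
    using quad_expand[OF sym, of v0 1 d 0 d] vd by simp
  moreover have "d \<bullet> (A *v v0) = mu * (d \<bullet> v0)" using fo dS by blast
  moreover have "v \<bullet> v = v0 \<bullet> v0 + 2 * (d \<bullet> v0) + d \<bullet> d"
    unfolding d_def by (simp add: inner_diff_left inner_diff_right inner_commute)
  moreover have "v \<bullet> v = 1" "v0 \<bullet> v0 = 1" using f f0 unfolding crq_feasible_def by auto
  ultimately have "d \<bullet> d = - 2 * (d \<bullet> v0)" "v \<bullet> (A *v v) = v0 \<bullet> (A *v v0) + 2 * (mu * (d \<bullet> v0)) + d \<bullet> (A *v d)"
    by linarith+
  thus ?thesis unfolding d_def[symmetric] by (simp add: algebra_simps)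
qed


lemma first_order:
  fixes A :: "real^'n^'n" and C :: "real^'m^'n"
  assumes sym: "transpose A = A" and rk: "rank C = CARD('m)"
    and n0: "norm (n0_vec C b) < 1"
    and mn: "crq_minimizer A C b v1"
  shows "\<exists>lam. \<forall>x. transpose C *v x = 0 \<longrightarrow> x \<bullet> (A *v v1) = lam * (x \<bullet> v1)"
proof -
  define n where "n = n0_vec C b"
  define u where "u = v1 - n"
  have f1: "crq_feasible C b v1" using mn unfolding crq_minimizer_def by blast
  have mn': "\<And>w. crq_feasible C b w \<Longrightarrow> v1 \<bullet> (A *v v1) \<le> w \<bullet> (A *v w)"
    using mn unfolding crq_minimizer_def by blast
  have nb: "transpose C *v n = b" unfolding n_def using n0_feas[OF rk] .
  have uS: "transpose C *v u = 0" using f1 nb unfolding u_def crq_feasible_def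
    by (simp add: matrix_vector_mult_diff_distrib)
  have nperp: "\<And>x. transpose C *v x = 0 \<Longrightarrow> n \<bullet> x = 0"
    unfolding n_def by (metis n0_perp inner_commute)
  have v1e: "v1 = n + 1 *\<^sub>R u + 0 *\<^sub>R u" unfolding u_def by simp
  have "v1 \<bullet> v1 = n \<bullet> n + u \<bullet> u"
    using nperp[OF uS] unfolding u_def by (simp add: inner_diff_left inner_diff_right inner_commute)
  moreover have "v1 \<bullet> v1 = 1" using f1 unfolding crq_feasible_def by simp
  moreover have "n \<bullet> n < 1" using n0 unfolding n_def
    by (metis inner_ge_zero norm_eq_sqrt_inner real_sqrt_lt_1_iff)
  ultimately have uu: "u \<bullet> u > 0" "n \<bullet> n + u \<bullet> u = 1" by linarith+
  have tangent: "w \<bullet> (A *v v1) = 0" if wS: "transpose C *v w = 0" and wu: "w \<bullet> u = 0" for w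
  proof (cases "w = 0")
    case True then show ?thesis by simp
  next
    case False
    define k where "k = norm u / norm w"
    have kpos: "k > 0" unfolding k_def using False uu(1) by auto
    define w' where "w' = k *\<^sub>R w"
    have w'S: "transpose C *v w' = 0" unfolding w'_def using wS by (simp add: matrix_vector_mult_scaleR)
    have w'u: "u \<bullet> w' = 0" unfolding w'_def using wu by (simp add: inner_commute)
    have w'w': "w' \<bullet> w' = u \<bullet> u"
    proof -
      have "w' \<bullet> w' = k\<^sup>2 * (norm w)\<^sup>2" unfolding w'_def by (simp add: dot_square_norm power2_eq_square)
      also have "\<dots> = (norm u)\<^sup>2" unfolding k_def using False by (simp add: field_simps)
      finally show ?thesis by (simp add: dot_square_norm)
    qed
    define \<alpha> where "\<alpha> = u \<bullet> (A *v v1)"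
    define \<beta> where "\<beta> = w' \<bullet> (A *v v1)"
    define \<gamma> where "\<gamma> = u \<bullet> (A *v w')"
    define qu where "qu = u \<bullet> (A *v u)"
    define qw where "qw = w' \<bullet> (A *v w')"
    define \<phi> where "\<phi> = (\<lambda>t. v1 \<bullet> (A *v v1) + 2 * (cos t - 1) * \<alpha> + 2 * sin t * \<beta>
        + (cos t - 1)\<^sup>2 * qu + 2 * (cos t - 1) * sin t * \<gamma> + (sin t)\<^sup>2 * qw)"
    have le: "\<phi> 0 \<le> \<phi> t" for t
    proof -
      define vt where "vt = n + cos t *\<^sub>R u + sin t *\<^sub>R w'"
      have "vt = v1 + (cos t - 1) *\<^sub>R u + sin t *\<^sub>R w'"
        unfolding vt_def u_def by (simp add: algebra_simps)
      hence Q: "vt \<bullet> (A *v vt) = \<phi> t"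
        unfolding \<phi>_def \<alpha>_def \<beta>_def \<gamma>_def qu_def qw_def using quad_expand[OF sym] by simp
      have "transpose C *v vt = b" unfolding vt_def using nb uS w'S
        by (simp add: matrix_vector_right_distrib matrix_vector_mult_scaleR)
      moreover have "vt \<bullet> vt = 1"
      proof -
        have "vt \<bullet> vt = n \<bullet> n + (cos t)\<^sup>2 * (u \<bullet> u) + (sin t)\<^sup>2 * (w' \<bullet> w')"
          unfolding vt_def by (rule norm_expand3) (use nperp uS w'S w'u in auto)
        also have "\<dots> = n \<bullet> n + u \<bullet> u" using w'w' by (simp flip: distrib_right)
        finally show ?thesis using uu by simp
      qed
      ultimately have "crq_feasible C b vt" unfolding crq_feasible_def by simp
      hence "v1 \<bullet> (A *v v1) \<le> \<phi> t" using mn' Q by metis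
      thus ?thesis unfolding \<phi>_def by simp
    qed
    have "DERIV \<phi> 0 :> 2 * \<beta>"
      unfolding \<phi>_def by (rule derivative_eq_intros refl | simp)+
    hence "2 * \<beta> = 0" using DERIV_local_min[where f=\<phi> and x=0 and l="2 * \<beta>" and d=1] le by (meson zero_less_one)
    hence "k * (w \<bullet> (A *v v1)) = 0" unfolding \<beta>_def w'_def by simp
    thus ?thesis using kpos by simp
  qed
  define lam where "lam = (u \<bullet> (A *v v1)) / (u \<bullet> u)"
  show ?thesis
  proof (intro exI allI impI)
    fix x assume xS: "transpose C *v x = 0"
    define c where "c = (x \<bullet> u) / (u \<bullet> u)"
    define w where "w = x - c *\<^sub>R u"
    have wS: "transpose C *v w = 0" unfolding w_def using xS uS
      by (simp add: matrix_vector_mult_diff_distrib matrix_vector_mult_scaleR)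
    have "w \<bullet> u = 0" unfolding w_def c_def using uu(1) by (simp add: inner_diff_left)
    hence "w \<bullet> (A *v v1) = 0" using tangent wS by blast
    hence "x \<bullet> (A *v v1) = c * (u \<bullet> (A *v v1))" unfolding w_def by (simp add: inner_diff_left)
    also have "\<dots> = lam * (x \<bullet> u)" unfolding c_def lam_def by simp
    also have "x \<bullet> u = x \<bullet> v1" unfolding u_def using nperp[OF xS] by (simp add: inner_diff_right inner_commute)
    finally show "x \<bullet> (A *v v1) = lam * (x \<bullet> v1)" .
  qed
qed


lemma q_add:
  fixes A :: "real^'n^'n"
  assumes sym: "transpose A = A"
  shows "(x + t *\<^sub>R y) \<bullet> (A *v (x + t *\<^sub>R y)) - lam * ((x + t *\<^sub>R y) \<bullet> (x + t *\<^sub>R y))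
     = (x \<bullet> (A *v x) - lam * (x \<bullet> x)) + 2 * t * (y \<bullet> (A *v x) - lam * (y \<bullet> x))
       + t\<^sup>2 * (y \<bullet> (A *v y) - lam * (y \<bullet> y))"
proof -
  have "x \<bullet> (A *v y) = y \<bullet> (A *v x)" using sym_inner[OF sym] .
  thus ?thesis
    by (simp add: matrix_vector_right_distrib matrix_vector_mult_scaleR inner_add_left inner_add_right
        inner_commute power2_eq_square algebra_simps)
qed

lemma q_scale:
  fixes A :: "real^'n^'n"
  shows "(t *\<^sub>R x) \<bullet> (A *v (t *\<^sub>R x)) - lam * ((t *\<^sub>R x) \<bullet> (t *\<^sub>R x))
     = t\<^sup>2 * (x \<bullet> (A *v x) - lam * (x \<bullet> x))"
  by (simp add: matrix_vector_mult_scaleR power2_eq_square algebra_simps)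

lemma psd:
  fixes A :: "real^'n^'n" and C :: "real^'m^'n"
  assumes sym: "transpose A = A" and rk: "rank C = CARD('m)"
    and n0: "norm (n0_vec C b) < 1"
    and mn: "crq_minimizer A C b v1"
    and fo: "\<forall>x. transpose C *v x = 0 \<longrightarrow> x \<bullet> (A *v v1) = lam * (x \<bullet> v1)"
  shows "\<forall>x. transpose C *v x = 0 \<longrightarrow> x \<bullet> (A *v x) - lam * (x \<bullet> x) \<ge> 0"
proof -
  define q where "q = (\<lambda>x. x \<bullet> (A *v x) - lam * (x \<bullet> x))"
  have f1: "crq_feasible C b v1" using mn unfolding crq_minimizer_def by blast
  have mn': "\<And>w. crq_feasible C b w \<Longrightarrow> v1 \<bullet> (A *v v1) \<le> w \<bullet> (A *v w)"
    using mn unfolding crq_minimizer_def by blast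
  have a: "q x \<ge> 0" if xS: "transpose C *v x = 0" and xv: "x \<bullet> v1 \<noteq> 0" for x
  proof -
    have xx: "x \<bullet> x \<noteq> 0" using xv by auto
    define t where "t = - 2 * (x \<bullet> v1) / (x \<bullet> x)"
    have t0: "t \<noteq> 0" unfolding t_def using xv xx by simp
    define v where "v = v1 + t *\<^sub>R x"
    have "transpose C *v v = b" using f1 xS unfolding v_def crq_feasible_def
      by (simp add: matrix_vector_right_distrib matrix_vector_mult_scaleR)
    moreover have "v \<bullet> v = 1"
    proof -
      have "v \<bullet> v = v1 \<bullet> v1 + t * (2 * (x \<bullet> v1) + t * (x \<bullet> x))"
        unfolding v_def by (simp add: inner_add_left inner_add_right inner_commute algebra_simps)
      also have "2 * (x \<bullet> v1) + t * (x \<bullet> x) = 0" unfolding t_def using xx by simp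
      finally show ?thesis using f1 unfolding crq_feasible_def by simp
    qed
    ultimately have fv: "crq_feasible C b v" unfolding crq_feasible_def by simp
    have "v \<bullet> (A *v v) - v1 \<bullet> (A *v v1) = q (t *\<^sub>R x)"
      using crq_identity[OF sym f1 fv fo] unfolding q_def v_def by simp
    also have "\<dots> = t\<^sup>2 * q x" unfolding q_def by (rule q_scale)
    finally have "t\<^sup>2 * q x \<ge> 0" using mn'[OF fv] by simp
    moreover have "t\<^sup>2 > 0" using t0 by simp
    ultimately show ?thesis by (simp add: zero_le_mult_iff)
  qed
  define n where "n = n0_vec C b"
  define u where "u = v1 - n"
  have nb: "transpose C *v n = b" unfolding n_def using n0_feas[OF rk] .
  have uS: "transpose C *v u = 0" using f1 nb unfolding u_def crq_feasible_def
    by (simp add: matrix_vector_mult_diff_distrib)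
  have nperp: "\<And>x. transpose C *v x = 0 \<Longrightarrow> x \<bullet> n = 0"
    unfolding n_def by (metis n0_perp)
  have "v1 \<bullet> v1 = n \<bullet> n + u \<bullet> u"
    using nperp[OF uS] unfolding u_def by (simp add: inner_diff_left inner_diff_right inner_commute)
  moreover have "v1 \<bullet> v1 = 1" using f1 unfolding crq_feasible_def by simp
  moreover have "n \<bullet> n < 1" using n0 unfolding n_def
    by (metis inner_ge_zero norm_eq_sqrt_inner real_sqrt_lt_1_iff)
  ultimately have uu: "u \<bullet> u > 0" by linarith
  have uv: "x \<bullet> v1 = x \<bullet> u" if "transpose C *v x = 0" for x
    using nperp[OF that] unfolding u_def by (simp add: inner_diff_right)
  have qu: "q u \<ge> 0" using a[OF uS] uv[OF uS] uu by simp
  show ?thesis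
  proof (intro allI impI)
    fix x assume xS: "transpose C *v x = 0"
    show "x \<bullet> (A *v x) - lam * (x \<bullet> x) \<ge> 0"
    proof (cases "x \<bullet> v1 = 0")
      case False thus ?thesis using a[OF xS] unfolding q_def by simp
    next
      case True
      have bound: "q x \<ge> - s\<^sup>2 * q u" if s: "s > 0" for s
      proof -
        have S1: "transpose C *v (x + s *\<^sub>R u) = 0" "transpose C *v (x + (-s) *\<^sub>R u) = 0"
          using xS uS by (simp_all add: matrix_vector_right_distrib matrix_vector_mult_scaleR matrix_vector_mult_diff_distrib del: transpose_matrix_vector)
        have "(x + s *\<^sub>R u) \<bullet> v1 = s * (u \<bullet> u)" "(x + (-s) *\<^sub>R u) \<bullet> v1 = - s * (u \<bullet> u)"
          using True uv[OF uS] by (simp_all add: inner_add_left inner_diff_left)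
        hence "(x + s *\<^sub>R u) \<bullet> v1 \<noteq> 0" "(x + (-s) *\<^sub>R u) \<bullet> v1 \<noteq> 0" using s uu by auto
        hence "q (x + s *\<^sub>R u) \<ge> 0" "q (x + (-s) *\<^sub>R u) \<ge> 0" using a S1 by auto
        moreover have "q (x + s *\<^sub>R u) + q (x + (-s) *\<^sub>R u) = 2 * q x + 2 * s\<^sup>2 * q u"
          unfolding q_def using q_add[OF sym, of x s u lam] q_add[OF sym, of x "-s" u lam] by simp
        ultimately show ?thesis by (simp add: algebra_simps)
      qed
      show ?thesis
      proof (rule ccontr)
        assume "\<not> ?thesis"
        hence neg: "q x < 0" unfolding q_def by simp
        hence "q u > 0" using bound[of 1] qu by simp
        define s where "s = sqrt (- q x / (2 * q u))"
        have "s > 0" unfolding s_def using neg \<open>q u > 0\<close> by (simp add: divide_neg_pos)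
        moreover have "s\<^sup>2 = - q x / (2 * q u)" unfolding s_def using neg \<open>q u > 0\<close> by (simp add: divide_neg_pos less_imp_le)
        ultimately have "q x \<ge> q x / 2" using bound[of s] \<open>q u > 0\<close> by simp
        thus False using neg by simp
      qed
    qed
  qed
qed

lemma crq_exists:
  fixes A :: "real^'n^'n" and C :: "real^'m^'n"
  assumes rk: "rank C = CARD('m)" and card: "CARD('m) < CARD('n)"
    and n0: "norm (n0_vec C b) < 1"
  shows "\<exists>v. crq_minimizer A C b v"
proof -
  define F where "F = {v. crq_feasible C b v}"
  have "rank (transpose C) \<noteq> CARD('n)" using rk card rank_transpose[of C] by simp
  then obtain z where z: "z \<noteq> 0" "transpose C *v z = 0"
    using matrix_nonfull_linear_equations_eq by blast
  define n where "n = n0_vec C b"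
  define v where "v = n + (sqrt (1 - n \<bullet> n) / norm z) *\<^sub>R z"
  have nn: "n \<bullet> n < 1" using n0 unfolding n_def
    by (metis inner_ge_zero norm_eq_sqrt_inner real_sqrt_lt_1_iff)
  have "transpose C *v v = b" unfolding v_def n_def using n0_feas[OF rk] z
    by (simp add: matrix_vector_right_distrib matrix_vector_mult_scaleR)
  moreover have "v \<bullet> v = 1"
  proof -
    have zn: "z \<bullet> n = 0" unfolding n_def using n0_perp[OF z(2)] .
    have "v \<bullet> v = n \<bullet> n + (sqrt (1 - n \<bullet> n) / norm z)\<^sup>2 * (z \<bullet> z)"
      unfolding v_def using zn by (simp add: inner_add_left inner_add_right inner_commute power2_eq_square)
    also have "(sqrt (1 - n \<bullet> n) / norm z)\<^sup>2 * (z \<bullet> z) = 1 - n \<bullet> n"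
      using z(1) nn by (simp add: power_divide dot_square_norm)
    finally show ?thesis by simp
  qed
  ultimately have "v \<in> F" unfolding F_def crq_feasible_def by simp
  hence ne: "F \<noteq> {}" by blast
  have cl: "closed F"
  proof -
    have "F = {v. v \<bullet> v = 1} \<inter> {v. transpose C *v v = b}" unfolding F_def crq_feasible_def by auto
    moreover have "closed {v::real^'n. v \<bullet> v = 1}"
      by (rule closed_Collect_eq) (intro continuous_intros)+
    moreover have "closed {v::real^'n. transpose C *v v = b}"
      by (rule closed_Collect_eq, rule linear_continuous_on, rule matrix_vector_mul_bounded_linear, rule continuous_intros)
    ultimately show ?thesis by auto
  qed
  have bd: "bounded F"
  proof -
    have "F \<subseteq> cball 0 1" unfolding F_def crq_feasible_def
      by (auto simp: norm_eq_sqrt_inner)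
    thus ?thesis using bounded_cball bounded_subset by blast
  qed
  have "continuous_on F (\<lambda>v. v \<bullet> (A *v v))"
    by (intro continuous_on_inner continuous_on_id linear_continuous_on matrix_vector_mul_bounded_linear)
  then obtain v1 where "v1 \<in> F" "\<forall>y\<in>F. v1 \<bullet> (A *v v1) \<le> y \<bullet> (A *v y)"
    using continuous_attains_inf[of F] cl bd ne compact_eq_bounded_closed by blast
  thus ?thesis unfolding crq_minimizer_def F_def by auto
qed


lemma M_inner:
  fixes C :: "real^'m^'n" and A :: "real^'n^'n"
  assumes "transpose C *v x = 0" "transpose C *v w = 0"
  shows "x \<bullet> ((projP C ** A ** projP C - mu *\<^sub>R mat 1) *v w) = x \<bullet> (A *v w) - mu * (x \<bullet> w)"
  using M_apply[OF assms(2), of A mu] projP_inner[OF assms(1)] by (simp add: inner_diff_right)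

lemma M_in:
  fixes C :: "real^'m^'n" and A :: "real^'n^'n"
  assumes rk: "rank C = CARD('m)" and "transpose C *v w = 0"
  shows "transpose C *v ((projP C ** A ** projP C - mu *\<^sub>R mat 1) *v w) = 0"
  using M_apply[OF assms(2), of A mu] projP_in[OF rk] assms(2)
  by (simp add: matrix_vector_mult_diff_distrib matrix_vector_mult_scaleR del: transpose_matrix_vector)

lemma gam_sq:
  fixes C :: "real^'m^'n"
  assumes "norm (n0_vec C b) < 1"
  shows "(gam C b)\<^sup>2 = 1 - n0_vec C b \<bullet> n0_vec C b"
proof -
  have "(norm (n0_vec C b))\<^sup>2 < 1" using assms by (simp add: power_less_one_iff abs_square_less_1)
  thus ?thesis unfolding gam_def by (simp add: power2_norm_eq_inner)
qed

lemma qep_lower: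
  fixes A :: "real^'n^'n" and C :: "real^'m^'n"
  assumes sym: "transpose A = A" and rk: "rank C = CARD('m)"
    and n0: "norm (n0_vec C b) < 1"
    and ps: "\<forall>x. transpose C *v x = 0 \<longrightarrow> x \<bullet> (A *v x) - lam * (x \<bullet> x) \<ge> 0"
    and m1: "crq_minimizer A C b v1" and m2: "crq_minimizer A C b v2" and ne: "v1 \<noteq> v2"
    and qf: "qep_feasible A C b lam' z"
  shows "lam \<le> lam'"
proof (rule ccontr)
  assume "\<not> lam \<le> lam'"
  hence ll: "lam' < lam" by simp
  have pd: "x \<bullet> (A *v x) - lam' * (x \<bullet> x) > 0" if "transpose C *v x = 0" "x \<noteq> 0" for x
  proof -
    have "x \<bullet> x > 0" using that(2) by simp
    hence "(lam - lam') * (x \<bullet> x) > 0" using ll by simp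
    moreover have "x \<bullet> (A *v x) - lam * (x \<bullet> x) \<ge> 0" using ps that(1) by blast
    ultimately show ?thesis by (simp add: algebra_simps)
  qed
  define n where "n = n0_vec C b"
  define b0 where "b0 = b0_vec A C b"
  define M where "M = projP C ** A ** projP C - lam' *\<^sub>R mat 1"
  define g2 where "g2 = 1 - n \<bullet> n"
  have nn: "n \<bullet> n < 1" using n0 unfolding n_def
    by (metis inner_ge_zero norm_eq_sqrt_inner real_sqrt_lt_1_iff)
  hence g2p: "g2 > 0" unfolding g2_def by simp
  have gg: "(gam C b)\<^sup>2 = g2" unfolding g2_def n_def using gam_sq[OF n0] .
  define c where "c = inverse g2 * (b0 \<bullet> z)"
  have z0: "z \<noteq> 0" and zS: "transpose C *v z = 0" and eq: "M *v (M *v z) = c *\<^sub>R b0"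
    using qf unfolding qep_feasible_def M_def c_def gg b0_def Let_def by auto
  have b0S: "transpose C *v b0 = 0" unfolding b0_def b0_vec_def using projP_in[OF rk] .
  have b0i: "x \<bullet> b0 = x \<bullet> (A *v n)" if "transpose C *v x = 0" for x
    unfolding b0_def b0_vec_def n_def using projP_inner[OF that] .
  have nperp: "x \<bullet> n = 0" if "transpose C *v x = 0" for x
    unfolding n_def using n0_perp[OF that] .
  have nb: "transpose C *v n = b" unfolding n_def using n0_feas[OF rk] .
  define y where "y = M *v z"
  have yS: "transpose C *v y = 0" unfolding y_def M_def using M_in[OF rk zS] .
  have Mi: "x \<bullet> (M *v w) = x \<bullet> (A *v w) - lam' * (x \<bullet> w)"
    if "transpose C *v x = 0" "transpose C *v w = 0" for x w
    unfolding M_def using M_inner[OF that] .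
  have bz: "b0 \<bullet> z = c * g2" unfolding c_def using g2p by simp
  have "z \<bullet> (M *v y) = c * (b0 \<bullet> z)" using eq unfolding y_def by (simp add: inner_commute)
  also have "\<dots> = c\<^sup>2 * g2" using bz by (simp add: power2_eq_square)
  finally have e1: "z \<bullet> (M *v y) = c\<^sup>2 * g2" .
  have "z \<bullet> (M *v y) = y \<bullet> (M *v z)"
    using Mi[OF zS yS] Mi[OF yS zS] sym_inner[OF sym, of z y] by (simp add: inner_commute)
  hence yy: "y \<bullet> y = c\<^sup>2 * g2" using e1 unfolding y_def by simp
  show False
  proof (cases "c = 0")
    case True
    hence "y = 0" using yy by simp
    hence "z \<bullet> (M *v z) = 0" unfolding y_def by simp
    thus False using Mi[OF zS zS] pd[OF zS z0] by simp
  next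
    case False
    define u where "u = (- 1 / c) *\<^sub>R y"
    have uS: "transpose C *v u = 0" unfolding u_def using yS by (simp only: matrix_vector_mult_scaleR scaleR_zero_right)
    have uu: "u \<bullet> u = g2" unfolding u_def using yy False by (simp add: power2_eq_square)
    have "M *v u = (- 1 / c) *\<^sub>R (M *v y)" unfolding u_def by (simp only: matrix_vector_mult_scaleR)
    also have "\<dots> = (- 1 / c) *\<^sub>R (c *\<^sub>R b0)" using eq unfolding y_def by simp
    also have "\<dots> = - b0" using False by simp
    finally have Mu: "M *v u = - b0" .
    define v' where "v' = n + u"
    have fv': "crq_feasible C b v'"
    proof -
      have "transpose C *v v' = b" unfolding v'_def using nb uS by (simp add: matrix_vector_right_distrib)
      moreover have "v' \<bullet> v' = n \<bullet> n + u \<bullet> u" unfolding v'_def using nperp[OF uS]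
        by (simp add: inner_add_left inner_add_right inner_commute)
      ultimately show ?thesis unfolding crq_feasible_def using uu g2_def by simp
    qed
    have fo': "\<forall>x. transpose C *v x = 0 \<longrightarrow> x \<bullet> (A *v v') = lam' * (x \<bullet> v')"
    proof (intro allI impI)
      fix x assume xS: "transpose C *v x = 0"
      have "x \<bullet> (M *v u) = - (x \<bullet> (A *v n))" using Mu b0i[OF xS] by simp
      hence "x \<bullet> (A *v u) = - (x \<bullet> (A *v n)) + lam' * (x \<bullet> u)" using Mi[OF xS uS] by simp
      thus "x \<bullet> (A *v v') = lam' * (x \<bullet> v')" unfolding v'_def using nperp[OF xS]
        by (simp add: matrix_vector_right_distrib inner_add_right)
    qed
    have eqv: "vi = v'" if mi: "crq_minimizer A C b vi" for vi
    proof (rule ccontr)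
      assume nv: "vi \<noteq> v'"
      have fi: "crq_feasible C b vi" using mi unfolding crq_minimizer_def by blast
      have "vi \<bullet> (A *v vi) \<le> v' \<bullet> (A *v v')" using mi fv' unfolding crq_minimizer_def by blast
      moreover have "vi \<bullet> (A *v vi) - v' \<bullet> (A *v v') = (vi - v') \<bullet> (A *v (vi - v')) - lam' * ((vi - v') \<bullet> (vi - v'))"
        using crq_identity[OF sym fv' fi fo'] .
      moreover have "transpose C *v (vi - v') = 0" using fi fv' unfolding crq_feasible_def
        by (simp add: matrix_vector_mult_diff_distrib del: transpose_matrix_vector)
      ultimately show False using pd[of "vi - v'"] nv by force
    qed
    show False using eqv[OF m1] eqv[OF m2] ne by simp
  qed
qed


lemma zero_form:
  fixes b c :: real
  assumes h: "\<And>t. 0 \<le> 2 * t * b + t\<^sup>2 * c"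
  shows "b = 0"
proof -
  have "0 \<le> 2 * b + c" "0 \<le> - 2 * b + c" using h[of 1] h[of "-1"] by simp_all
  hence c0: "c \<ge> 0" by simp
  define t where "t = - b / (c + 1)"
  have "0 \<le> 2 * t * b + t\<^sup>2 * c" by (rule h)
  hence "0 \<le> (c + 1)\<^sup>2 * (2 * t * b + t\<^sup>2 * c)" using c0 by simp
  also have "\<dots> = 2 * b * (c + 1) * (t * (c + 1)) + (t * (c + 1))\<^sup>2 * c"
    by (simp add: power2_eq_square algebra_simps)
  also have "t * (c + 1) = - b" unfolding t_def using c0 by simp
  also have "2 * b * (c + 1) * (- b) + (- b)\<^sup>2 * c = - b\<^sup>2 * (c + 2)"
    by (simp add: power2_eq_square algebra_simps)
  finally have "b\<^sup>2 * (c + 2) \<le> 0" by simp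
  moreover have "c + 2 > 0" using c0 by simp
  ultimately have "b\<^sup>2 \<le> 0" by (simp add: mult_le_0_iff)
  thus ?thesis by simp
qed

theorem theorem2p13:
  fixes A :: "real^'n^'n" and C :: "real^'m^'n" and b :: "real^'m"
  assumes "transpose A = A"
    and "CARD('m) < CARD('n)"
    and "rank C = CARD('m)"
    and "norm (n0_vec C b) < 1"
    and "b0_vec A C b \<noteq> 0"
    and "qep_easy_case A C b"
  shows "\<exists>!v. crq_minimizer A C b v"
proof -
  note sym = assms(1) and rk = assms(3) and n0 = assms(4)
  obtain v1 where m1: "crq_minimizer A C b v1" using crq_exists[OF rk assms(2) n0] by blast
  obtain lam where fo: "\<forall>x. transpose C *v x = 0 \<longrightarrow> x \<bullet> (A *v v1) = lam * (x \<bullet> v1)"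
    using first_order[OF sym rk n0 m1] by blast
  have ps: "\<forall>x. transpose C *v x = 0 \<longrightarrow> x \<bullet> (A *v x) - lam * (x \<bullet> x) \<ge> 0"
    using psd[OF sym rk n0 m1 fo] .
  show ?thesis
  proof (rule ex1I[of _ v1])
    show "crq_minimizer A C b v1" by (rule m1)
  next
    fix v2 assume m2: "crq_minimizer A C b v2"
    show "v2 = v1"
    proof (rule ccontr)
      assume ne: "v2 \<noteq> v1"
      have f1: "crq_feasible C b v1" using m1 unfolding crq_minimizer_def by blast
      have f2: "crq_feasible C b v2" using m2 unfolding crq_minimizer_def by blast
      have "v1 \<bullet> (A *v v1) \<le> v2 \<bullet> (A *v v2)" "v2 \<bullet> (A *v v2) \<le> v1 \<bullet> (A *v v1)"
        using m1 m2 f1 f2 unfolding crq_minimizer_def by blast+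
      define d where "d = v2 - v1"
      have dS: "transpose C *v d = 0" using f1 f2 unfolding d_def crq_feasible_def
        by (simp add: matrix_vector_mult_diff_distrib del: transpose_matrix_vector)
      have d0: "d \<noteq> 0" using ne unfolding d_def by simp
      have qd: "d \<bullet> (A *v d) - lam * (d \<bullet> d) = 0"
        using crq_identity[OF sym f1 f2 fo] \<open>v1 \<bullet> (A *v v1) \<le> v2 \<bullet> (A *v v2)\<close>
          \<open>v2 \<bullet> (A *v v2) \<le> v1 \<bullet> (A *v v1)\<close> unfolding d_def by simp
      have Bz: "y \<bullet> (A *v d) - lam * (y \<bullet> d) = 0" if yS: "transpose C *v y = 0" for y
      proof (rule zero_form)
        fix t
        have "transpose C *v (d + t *\<^sub>R y) = 0" using dS yS
          by (simp add: matrix_vector_right_distrib matrix_vector_mult_scaleR del: transpose_matrix_vector)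
        hence "0 \<le> (d + t *\<^sub>R y) \<bullet> (A *v (d + t *\<^sub>R y)) - lam * ((d + t *\<^sub>R y) \<bullet> (d + t *\<^sub>R y))"
          using ps by blast
        also have "\<dots> = 2 * t * (y \<bullet> (A *v d) - lam * (y \<bullet> d)) + t\<^sup>2 * (y \<bullet> (A *v y) - lam * (y \<bullet> y))"
          using q_add[OF sym, of d t y lam] qd by simp
        finally show "0 \<le> 2 * t * (y \<bullet> (A *v d) - lam * (y \<bullet> d)) + t\<^sup>2 * (y \<bullet> (A *v y) - lam * (y \<bullet> y))" .
      qed
      define n where "n = n0_vec C b"
      define b0 where "b0 = b0_vec A C b"
      define M where "M = projP C ** A ** projP C - lam *\<^sub>R mat 1"
      define r where "r = A *v d - lam *\<^sub>R d"
      have PrS: "transpose C *v (projP C *v r) = 0" using projP_in[OF rk] .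
      have "(projP C *v r) \<bullet> (projP C *v r) = (projP C *v r) \<bullet> r" using projP_inner[OF PrS] .
      also have "\<dots> = 0" using Bz[OF PrS] unfolding r_def by (simp add: inner_diff_right)
      finally have Pr: "projP C *v r = 0" by simp
      have Md: "M *v d = 0"
      proof -
        have "M *v d = projP C *v (A *v d) - lam *\<^sub>R d" unfolding M_def using M_apply[OF dS] .
        also have "\<dots> = projP C *v r" unfolding r_def using projP_id[OF dS]
          by (simp add: matrix_vector_mult_diff_distrib matrix_vector_mult_scaleR)
        finally show ?thesis using Pr by simp
      qed
      have bd: "b0 \<bullet> d = 0"
      proof -
        define u where "u = v1 - n"
        have nb: "transpose C *v n = b" unfolding n_def using n0_feas[OF rk] .
        have uS: "transpose C *v u = 0" using f1 nb unfolding u_def crq_feasible_def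
          by (simp add: matrix_vector_mult_diff_distrib del: transpose_matrix_vector)
        have "b0 \<bullet> d = d \<bullet> (A *v n)" unfolding b0_def b0_vec_def n_def
          using projP_inner[OF dS] by (simp add: inner_commute)
        also have "\<dots> = d \<bullet> (A *v v1) - d \<bullet> (A *v u)" unfolding u_def
          by (simp add: matrix_vector_mult_diff_distrib inner_diff_right)
        also have "d \<bullet> (A *v u) = u \<bullet> (A *v d)" using sym_inner[OF sym] .
        also have "\<dots> = lam * (u \<bullet> d)" using Bz[OF uS] by simp
        also have "d \<bullet> (A *v v1) = lam * (d \<bullet> v1)" using fo dS by blast
        also have "d \<bullet> v1 = u \<bullet> d" unfolding u_def n_def using n0_perp[OF dS]
          by (simp add: inner_diff_left inner_diff_right inner_commute)
        finally show ?thesis by simp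
      qed
      have qfe: "qep_feasible A C b lam d"
        unfolding qep_feasible_def Let_def using d0 dS Md bd unfolding M_def b0_def by simp
      have "qep_minimizer A C b lam d"
        unfolding qep_minimizer_def using qfe qep_lower[OF sym rk n0 ps m1 m2 ne[symmetric]] by blast
      hence "qep_hard_case A C b" unfolding qep_hard_case_def using bd unfolding b0_def by blast
      thus False using assms(6) unfolding qep_easy_case_def by blast
    qed
  qed
qed

end
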